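(* Let $\Phi$ be a root system and $\beta_1,\dots,\beta_r\in\Phi$ pairwise strongly orthogonal roots. Then there is $\omega$ in the dual lattice $(\mathbb Z[\Phi])^*=\{\omega\in V:(\alpha|\omega)\in\mathbb Z\ \forall\alpha\in\Phi\}$ such that $(\beta_i|\omega)=1$ for all $i=1,\dots,r$.
   Context: $\Phi$ is a reduced crystallographic root system spanning a real Euclidean space $V$ whose inner product $(\cdot|\cdot)$ is invariant under the Weyl group (e.g. dual to the Killing form). Distinct roots are strongly orthogonal if they are orthogonal and neither their sum nor difference is a root. *)

theory Defs
  imports "HOL-Analysis.Analysis"
begin

text \<open>Reduced crystallographic root system spanning the Euclidean space 'a,
  with respect to the inner product of 'a (which is then Weyl-invariant).\<close>

definition refl_root :: "'a::euclidean_space \<Rightarrow> 'a \<Rightarrow> 'a" where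
  "refl_root \<alpha> v = v - (2 * (v \<bullet> \<alpha>) / (\<alpha> \<bullet> \<alpha>)) *\<^sub>R \<alpha>"

definition root_system :: "'a::euclidean_space set \<Rightarrow> bool" where
  "root_system \<Phi> \<longleftrightarrow>
     finite \<Phi> \<and> 0 \<notin> \<Phi> \<and> span \<Phi> = UNIV \<and>
     (\<forall>\<alpha>\<in>\<Phi>. \<forall>\<beta>\<in>\<Phi>. refl_root \<alpha> \<beta> \<in> \<Phi>) \<and>
     (\<forall>\<alpha>\<in>\<Phi>. \<forall>\<beta>\<in>\<Phi>. 2 * (\<beta> \<bullet> \<alpha>) / (\<alpha> \<bullet> \<alpha>) \<in> \<int>) \<and>
     (\<forall>\<alpha>\<in>\<Phi>. \<forall>c::real. c *\<^sub>R \<alpha> \<in> \<Phi> \<longrightarrow> c = 1 \<or> c = -1)"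

definition strongly_orthogonal :: "'a::euclidean_space set \<Rightarrow> 'a \<Rightarrow> 'a \<Rightarrow> bool" where
  "strongly_orthogonal \<Phi> \<alpha> \<beta> \<longleftrightarrow>
     \<alpha> \<noteq> \<beta> \<and> \<alpha> \<bullet> \<beta> = 0 \<and> \<alpha> + \<beta> \<notin> \<Phi> \<and> \<alpha> - \<beta> \<notin> \<Phi>"

end

theory Submission
  imports Defs
begin

lemma inv_pair_even:
  fixes f :: "'b \<Rightarrow> int"
  assumes "finite A" "\<And>x. x \<in> A \<Longrightarrow> \<tau> x \<in> A" "\<And>x. x \<in> A \<Longrightarrow> \<tau> (\<tau> x) = x"
    "\<And>x. x \<in> A \<Longrightarrow> f (\<tau> x) = f x" "\<And>x. x \<in> A \<Longrightarrow> \<tau> x \<noteq> x"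
  shows "even (sum f A)"
  using assms
proof (induction "card A" arbitrary: A rule: less_induct)
  case less
  show ?case
  proof (cases "A = {}")
    case True then show ?thesis by simp
  next
    case False
    then obtain x where x: "x \<in> A" by auto
    let ?B = "A - {x, \<tau> x}"
    have tx: "\<tau> x \<in> A" "\<tau> x \<noteq> x" using less.prems x by auto
    have cB: "card ?B < card A"
      using less.prems(1) x by (intro psubset_card_mono) auto
    have "even (sum f ?B)"
    proof (rule less.hyps[OF cB])
      show "finite ?B" using less.prems(1) by auto
      fix y assume y: "y \<in> ?B"
      then have yA: "y \<in> A" and yx: "y \<noteq> x" "y \<noteq> \<tau> x" by auto
      have "\<tau> y \<noteq> x" using less.prems(3)[OF yA] yx by metis
      moreover have "\<tau> y \<noteq> \<tau> x" using less.prems(3)[OF yA] less.prems(3)[OF x] yx by metis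
      ultimately show "\<tau> y \<in> ?B" using less.prems(2)[OF yA] by simp
      show "\<tau> (\<tau> y) = y" "f (\<tau> y) = f y" "\<tau> y \<noteq> y" using yA less.prems(3,4,5) by auto
    qed
    moreover have "sum f A = sum f ?B + sum f {x, \<tau> x}"
      using less.prems(1) x tx by (intro sum.subset_diff) auto
    moreover have "sum f {x, \<tau> x} = f x + f (\<tau> x)" using tx by simp
    moreover have "f (\<tau> x) = f x" using less.prems(4) x by auto
    ultimately show ?thesis by simp
  qed
qed
lemma inv_even:
  fixes f :: "'b \<Rightarrow> int"
  assumes "finite A" "\<And>x. x \<in> A \<Longrightarrow> \<tau> x \<in> A" "\<And>x. x \<in> A \<Longrightarrow> \<tau> (\<tau> x) = x"
    "\<And>x. x \<in> A \<Longrightarrow> f (\<tau> x) = f x"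
  shows "even (sum f A - sum f {x\<in>A. \<tau> x = x})"
proof -
  let ?N = "{x\<in>A. \<tau> x \<noteq> x}"
  have "even (sum f ?N)"
  proof (rule inv_pair_even[where \<tau>=\<tau>])
    show "finite ?N" using assms by auto
    fix x assume "x \<in> ?N"
    then show "\<tau> x \<in> ?N" "\<tau> (\<tau> x) = x" "f (\<tau> x) = f x" "\<tau> x \<noteq> x" using assms(2-4) by force+
  qed
  moreover have "sum f A = sum f ?N + sum f {x\<in>A. \<tau> x = x}"
  proof -
    have "A = ?N \<union> {x\<in>A. \<tau> x = x}" by blast
    then have "sum f A = sum f (?N \<union> {x\<in>A. \<tau> x = x})" by simp
    also have "\<dots> = sum f ?N + sum f {x\<in>A. \<tau> x = x}"
      by (rule sum.union_disjoint) (use assms(1) in auto)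
    finally show ?thesis .
  qed
  ultimately show ?thesis by simp
qed

lemma sum_odd_card:
  fixes f :: "'b \<Rightarrow> int"
  assumes "finite A"
  shows "even (sum f A - int (card {x\<in>A. odd (f x)}))"
  using assms
proof (induction A rule: finite_induct)
  case empty then show ?case by simp
next
  case (insert a A)
  show ?case
  proof (cases "odd (f a)")
    case True
    have "{x\<in>insert a A. odd (f x)} = insert a {x\<in>A. odd (f x)}" using True by auto
    moreover have "card (insert a {x\<in>A. odd (f x)}) = Suc (card {x\<in>A. odd (f x)})"
      using insert by auto
    ultimately show ?thesis using insert True by auto
  next
    case False
    have "{x\<in>insert a A. odd (f x)} = {x\<in>A. odd (f x)}" using False by auto
    then show ?thesis using insert False by auto
  qed
qed

lemma sum_neg_inv_zero:
  fixes f :: "'b \<Rightarrow> 'c::linordered_idom"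
  assumes "finite A" "\<And>x. x \<in> A \<Longrightarrow> \<tau> x \<in> A" "\<And>x. x \<in> A \<Longrightarrow> \<tau> (\<tau> x) = x"
    "\<And>x. x \<in> A \<Longrightarrow> f (\<tau> x) = - f x"
  shows "sum f A = 0"
proof -
  have bij: "bij_betw \<tau> A A"
    by (rule bij_betwI[where g=\<tau>]) (use assms in auto)
  have "sum f A = sum (f \<circ> \<tau>) A" using sum.reindex_bij_betw[OF bij, of f] by simp
  also have "\<dots> = - sum f A" using assms(4) by (simp add: sum_negf)
  finally show ?thesis by (simp add: equal_neg_zero)
qed



lemma refl_root_refl: "(\<alpha>::'a::euclidean_space) \<noteq> 0 \<Longrightarrow> refl_root \<alpha> (refl_root \<alpha> v) = v"
  unfolding refl_root_def by (simp add: inner_diff_left algebra_simps)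

lemma refl_root_inner: "(\<alpha>::'a::euclidean_space) \<noteq> 0 \<Longrightarrow> refl_root \<alpha> x \<bullet> refl_root \<alpha> y = x \<bullet> y"
  unfolding refl_root_def by (simp add: inner_diff_left inner_diff_right algebra_simps power2_eq_square inner_commute)

lemma refl_root_self: "(\<alpha>::'a::euclidean_space) \<noteq> 0 \<Longrightarrow> refl_root \<alpha> \<alpha> = - \<alpha>"
  unfolding refl_root_def by (simp add: algebra_simps scaleR_2)

lemma refl_root_orth: "(v::'a::euclidean_space) \<bullet> \<alpha> = 0 \<Longrightarrow> refl_root \<alpha> v = v"
  unfolding refl_root_def by simp

lemma refl_root_neg: "refl_root \<alpha> (- v) = - refl_root \<alpha> (v::'a::euclidean_space)"
  unfolding refl_root_def by (simp add: algebra_simps)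

lemma refl_root_inner_self: "(\<alpha>::'a::euclidean_space) \<noteq> 0 \<Longrightarrow> refl_root \<alpha> x \<bullet> \<alpha> = - (x \<bullet> \<alpha>)"
  unfolding refl_root_def by (simp add: inner_diff_left algebra_simps)

definition cf :: "'a::euclidean_space \<Rightarrow> 'a \<Rightarrow> real" where
  "cf x y = 2 * (x \<bullet> y) / (y \<bullet> y)"

definition cI :: "'a::euclidean_space \<Rightarrow> 'a \<Rightarrow> int" where
  "cI x y = \<lfloor>cf x y\<rfloor>"

locale rootsys =
  fixes \<Phi> :: "'a::euclidean_space set"
  assumes rs: "root_system \<Phi>"
begin

lemma fin: "finite \<Phi>" using rs unfolding root_system_def by auto
lemma nz: "\<alpha> \<in> \<Phi> \<Longrightarrow> \<alpha> \<noteq> 0" using rs unfolding root_system_def by auto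
lemma sqpos: "\<alpha> \<in> \<Phi> \<Longrightarrow> \<alpha> \<bullet> \<alpha> > 0" using nz by auto
lemma refl_in: "\<alpha> \<in> \<Phi> \<Longrightarrow> \<beta> \<in> \<Phi> \<Longrightarrow> refl_root \<alpha> \<beta> \<in> \<Phi>"
  using rs unfolding root_system_def by auto
lemma neg_in: "\<alpha> \<in> \<Phi> \<Longrightarrow> - \<alpha> \<in> \<Phi>"
  using refl_in[of \<alpha> \<alpha>] refl_root_self[OF nz] by auto
lemma cint: "\<alpha> \<in> \<Phi> \<Longrightarrow> \<beta> \<in> \<Phi> \<Longrightarrow> cf \<beta> \<alpha> \<in> \<int>"
  using rs unfolding root_system_def cf_def by auto
lemma cI_eq: "\<alpha> \<in> \<Phi> \<Longrightarrow> \<beta> \<in> \<Phi> \<Longrightarrow> of_int (cI \<beta> \<alpha>) = cf \<beta> \<alpha>"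
  using cint unfolding cI_def by (metis Ints_cases floor_of_int)
lemma red: "\<alpha> \<in> \<Phi> \<Longrightarrow> c *\<^sub>R \<alpha> \<in> \<Phi> \<Longrightarrow> c = 1 \<or> c = -1"
  using rs unfolding root_system_def by auto

lemma cf_refl: "\<alpha> \<in> \<Phi> \<Longrightarrow> cf \<alpha> (refl_root \<alpha> \<gamma>) = - cf \<alpha> \<gamma>"
proof -
  assume a: "\<alpha> \<in> \<Phi>"
  have "\<alpha> \<bullet> refl_root \<alpha> \<gamma> = - (\<alpha> \<bullet> \<gamma>)"
    using refl_root_inner_self[OF nz[OF a], of \<gamma>] by (simp add: inner_commute)
  moreover have "refl_root \<alpha> \<gamma> \<bullet> refl_root \<alpha> \<gamma> = \<gamma> \<bullet> \<gamma>" using refl_root_inner[OF nz[OF a]] by simp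
  ultimately show ?thesis unfolding cf_def by simp
qed

lemma cf_neg: "cf \<alpha> (- \<gamma>) = - cf \<alpha> \<gamma>" unfolding cf_def by simp

lemma rho_even:
  assumes P: "P \<subseteq> \<Phi>" "\<And>\<gamma>. \<gamma> \<in> \<Phi> \<Longrightarrow> \<gamma> \<in> P \<longleftrightarrow> - \<gamma> \<notin> P" and a: "\<alpha> \<in> \<Phi>"
  shows "even (\<Sum>\<gamma>\<in>P. cI \<alpha> \<gamma>)"
proof -
  define s where "s = refl_root \<alpha>"
  define \<tau> where "\<tau> \<gamma> = (if s \<gamma> \<in> P then s \<gamma> else - s \<gamma>)" for \<gamma>
  define h where "h \<gamma> = \<bar>cI \<alpha> \<gamma>\<bar>" for \<gamma>
  have anz: "\<alpha> \<noteq> 0" using nz[OF a] .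
  have sP: "s \<gamma> \<in> \<Phi>" if "\<gamma> \<in> P" for \<gamma> using that P a refl_in s_def by auto
  have ss: "s (s \<gamma>) = \<gamma>" for \<gamma> unfolding s_def using refl_root_refl[OF anz] .
  have sneg: "s (- \<gamma>) = - s \<gamma>" for \<gamma> unfolding s_def by (rule refl_root_neg)
  have tP: "\<tau> \<gamma> \<in> P" if "\<gamma> \<in> P" for \<gamma>
    using sP[OF that] P(2) unfolding \<tau>_def by auto
  have tt: "\<tau> (\<tau> \<gamma>) = \<gamma>" if "\<gamma> \<in> P" for \<gamma>
  proof (cases "s \<gamma> \<in> P")
    case True then show ?thesis using that unfolding \<tau>_def by (simp add: ss)
  next
    case False
    have "- \<gamma> \<notin> P" using that P by auto
    then show ?thesis using False unfolding \<tau>_def by (simp add: ss sneg)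
  qed
  have cfs: "cf \<alpha> (\<tau> \<gamma>) = cf \<alpha> \<gamma> \<or> cf \<alpha> (\<tau> \<gamma>) = - cf \<alpha> \<gamma>" for \<gamma>
    unfolding \<tau>_def s_def by (simp add: cf_refl[OF a] cf_neg)
  have th: "h (\<tau> \<gamma>) = h \<gamma>" if "\<gamma> \<in> P" for \<gamma>
  proof -
    have g: "\<gamma> \<in> \<Phi>" "\<tau> \<gamma> \<in> \<Phi>" using that tP P by auto
    have "(of_int (cI \<alpha> (\<tau> \<gamma>))::real) = of_int (cI \<alpha> \<gamma>) \<or> (of_int (cI \<alpha> (\<tau> \<gamma>))::real) = - of_int (cI \<alpha> \<gamma>)"
      using cfs[of \<gamma>] cI_eq[OF g(1) a] cI_eq[OF g(2) a] by simp
    then have "cI \<alpha> (\<tau> \<gamma>) = cI \<alpha> \<gamma> \<or> cI \<alpha> (\<tau> \<gamma>) = - cI \<alpha> \<gamma>" by linarith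
    then show ?thesis unfolding h_def by auto
  qed
  have fix_even: "even (h \<gamma>)" if "\<gamma> \<in> P" "\<tau> \<gamma> = \<gamma>" for \<gamma>
  proof -
    have g: "\<gamma> \<in> \<Phi>" using that P by auto
    have "s \<gamma> = \<gamma> \<or> - s \<gamma> = \<gamma>" using that(2) unfolding \<tau>_def by (auto split: if_splits)
    then have "s \<gamma> = \<gamma> \<or> s \<gamma> = - \<gamma>" by (metis minus_minus)
    then show ?thesis
    proof
      assume "s \<gamma> = \<gamma>"
      then have "(2 * (\<gamma> \<bullet> \<alpha>) / (\<alpha> \<bullet> \<alpha>)) *\<^sub>R \<alpha> = 0" unfolding s_def refl_root_def by simp
      then have "\<gamma> \<bullet> \<alpha> = 0" using anz by simp
      then have "cf \<alpha> \<gamma> = 0" unfolding cf_def by (simp add: inner_commute)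
      then have "cI \<alpha> \<gamma> = 0" using cI_eq[OF g a] by simp
      then show ?thesis unfolding h_def by simp
    next
      assume "s \<gamma> = - \<gamma>"
      then have "\<gamma> - (2 * (\<gamma> \<bullet> \<alpha>) / (\<alpha> \<bullet> \<alpha>)) *\<^sub>R \<alpha> = - \<gamma>" unfolding s_def refl_root_def by simp
      then have "2 *\<^sub>R \<gamma> = (2 * (\<gamma> \<bullet> \<alpha>) / (\<alpha> \<bullet> \<alpha>)) *\<^sub>R \<alpha>"
        by (simp add: algebra_simps scaleR_2)
      then have "(1/2) *\<^sub>R (2 *\<^sub>R \<gamma>) = (1/2) *\<^sub>R ((2 * (\<gamma> \<bullet> \<alpha>) / (\<alpha> \<bullet> \<alpha>)) *\<^sub>R \<alpha>)" by simp
      then have e: "\<gamma> = ((\<gamma> \<bullet> \<alpha>) / (\<alpha> \<bullet> \<alpha>)) *\<^sub>R \<alpha>" by simp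
      define c where "c = (\<gamma> \<bullet> \<alpha>) / (\<alpha> \<bullet> \<alpha>)"
      have "c = 1 \<or> c = -1" using red[OF a] g e c_def by metis
      moreover have "\<gamma> = c *\<^sub>R \<alpha>" using e unfolding c_def .
      ultimately have "\<gamma> = \<alpha> \<or> \<gamma> = - \<alpha>" by auto
      moreover have "cf \<alpha> \<alpha> = 2" unfolding cf_def using sqpos[OF a] by simp
      moreover have "cf \<alpha> (- \<alpha>) = -2" using \<open>cf \<alpha> \<alpha> = 2\<close> cf_neg[of \<alpha> \<alpha>] by simp
      ultimately have "cf \<alpha> \<gamma> = 2 \<or> cf \<alpha> \<gamma> = -2" by auto
      then have "cI \<alpha> \<gamma> = 2 \<or> cI \<alpha> \<gamma> = -2" using cI_eq[OF g a] by auto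
      then show ?thesis unfolding h_def by auto
    qed
  qed
  have finP: "finite P" using P fin finite_subset by auto
  have e1: "even (sum h P - sum h {x\<in>P. \<tau> x = x})"
    by (rule inv_even[OF finP]) (simp_all add: tP tt th)
  have e2: "even (sum h {x\<in>P. \<tau> x = x})" by (rule dvd_sum) (use fix_even in auto)
  have e3: "even (sum h P)" using e1 e2 by (metis dvd_add diff_add_cancel)
  have "sum h P - (\<Sum>\<gamma>\<in>P. cI \<alpha> \<gamma>) = (\<Sum>\<gamma>\<in>P. h \<gamma> - cI \<alpha> \<gamma>)" by (simp add: sum_subtractf)
  moreover have "even (\<Sum>\<gamma>\<in>P. h \<gamma> - cI \<alpha> \<gamma>)"
    by (rule dvd_sum) (auto simp: h_def abs_if)
  ultimately have "even (sum h P - (\<Sum>\<gamma>\<in>P. cI \<alpha> \<gamma>))" by simp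
  then have "even (sum h P - (sum h P - (\<Sum>\<gamma>\<in>P. cI \<alpha> \<gamma>)))" using e3 by (rule_tac dvd_diff) auto
  then show ?thesis by simp
qed

end


lemma lex_half:
  fixes v :: "nat \<Rightarrow> real"
  assumes "\<exists>j<r. v j \<noteq> 0"
  shows "(\<exists>i<r. v i > 0 \<and> (\<forall>j<i. v j = 0)) \<longleftrightarrow> \<not> (\<exists>i<r. v i < 0 \<and> (\<forall>j<i. v j = 0))"
proof -
  define i0 where "i0 = (LEAST j. j < r \<and> v j \<noteq> 0)"
  have i0: "i0 < r \<and> v i0 \<noteq> 0" unfolding i0_def using assms by (metis (mono_tags, lifting) LeastI)
  have below: "\<forall>j<i0. v j = 0" unfolding i0_def using i0 i0_def
    by (metis (mono_tags, lifting) dual_order.strict_trans not_less_Least)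
  have uniq: "i = i0" if "i < r" "v i \<noteq> 0" "\<forall>j<i. v j = 0" for i
  proof -
    have "i0 \<le> i" unfolding i0_def using that by (simp add: Least_le)
    moreover have "\<not> i0 < i" using that(3) i0 by auto
    ultimately show ?thesis by simp
  qed
  show ?thesis
  proof
    assume "\<exists>i<r. v i > 0 \<and> (\<forall>j<i. v j = 0)"
    then obtain i where "i<r" "v i > 0" "\<forall>j<i. v j = 0" by auto
    then have "i = i0" using uniq by auto
    then show "\<not> (\<exists>i<r. v i < 0 \<and> (\<forall>j<i. v j = 0))"
      using uniq \<open>v i > 0\<close> by (metis less_asym' less_irrefl)
  next
    assume "\<not> (\<exists>i<r. v i < 0 \<and> (\<forall>j<i. v j = 0))"
    then have "v i0 > 0" using i0 below by (meson linorder_neqE_linordered_idom)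
    then show "\<exists>i<r. v i > 0 \<and> (\<forall>j<i. v j = 0)" using i0 below by auto
  qed
qed

definition halfC :: "'a::real_vector set" where
  "halfC = {x. x \<noteq> 0 \<and> (SOME y. y \<in> {x, -x}) = x}"

lemma halfC: "(x::'a::real_vector) \<noteq> 0 \<Longrightarrow> (x \<in> halfC \<longleftrightarrow> - x \<notin> halfC)"
proof -
  assume x: "x \<noteq> 0"
  define z where "z = (SOME y. y \<in> {x, -x})"
  have z: "z \<in> {x, -x}" unfolding z_def by (rule someI) auto
  have z2: "(SOME y. y \<in> {-x, - (-x)}) = z" unfolding z_def by (metis insert_commute minus_minus)
  have xx: "x \<noteq> - x" using x by (metis add.inverse_neutral minus_equation_iff neg_equal_iff_equal scaleR_2 scaleR_eq_0_iff zero_neq_numeral add_eq_0_iff2 equal_neg_zero)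
  show ?thesis using z z2 x xx unfolding halfC_def z_def by auto
qed

locale sos = rootsys +
  fixes b :: "nat \<Rightarrow> 'a::euclidean_space" and r :: nat
  assumes bin: "i < r \<Longrightarrow> b i \<in> \<Phi>"
    and so: "i < r \<Longrightarrow> j < r \<Longrightarrow> i \<noteq> j \<Longrightarrow> strongly_orthogonal \<Phi> (b i) (b j)"
begin

lemma borth: "i < r \<Longrightarrow> j < r \<Longrightarrow> i \<noteq> j \<Longrightarrow> b i \<bullet> b j = 0"
  using so unfolding strongly_orthogonal_def by auto
lemma bsum: "i < r \<Longrightarrow> j < r \<Longrightarrow> i \<noteq> j \<Longrightarrow> b i + b j \<notin> \<Phi>"
  using so unfolding strongly_orthogonal_def by auto
lemma bsq: "i < r \<Longrightarrow> b i \<bullet> b i > 0" using sqpos bin by auto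
lemma bnz: "i < r \<Longrightarrow> b i \<noteq> 0" using nz bin by auto

lemma sum_inner_b:
  assumes "k < r"
  shows "(\<Sum>j<r. f j *\<^sub>R b j) \<bullet> b k = f k * (b k \<bullet> b k)"
proof -
  have "(\<Sum>j<r. f j *\<^sub>R b j) \<bullet> b k = (\<Sum>j<r. f j * (b j \<bullet> b k))" by (simp add: inner_sum_left)
  also have "\<dots> = (\<Sum>j<r. if j = k then f k * (b k \<bullet> b k) else 0)"
    by (rule sum.cong) (use borth assms in auto)
  also have "\<dots> = f k * (b k \<bullet> b k)" using assms by simp
  finally show ?thesis .
qed

definition proj :: "'a \<Rightarrow> 'a" where
  "proj x = x - (\<Sum>j<r. ((x \<bullet> b j) / (b j \<bullet> b j)) *\<^sub>R b j)"

lemma proj_orth: "k < r \<Longrightarrow> proj x \<bullet> b k = 0"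
  unfolding proj_def using bsq by (simp add: inner_diff_left sum_inner_b)

lemma proj_diff: "proj (x - y) = proj x - proj y"
  unfolding proj_def by (simp add: inner_diff_left diff_divide_distrib scaleR_diff_left sum_subtractf algebra_simps)

lemma proj_scale: "proj (c *\<^sub>R x) = c *\<^sub>R proj x"
  unfolding proj_def by (simp add: scaleR_diff_right scaleR_sum_right)

lemma proj_neg: "proj (- x) = - proj x"
  using proj_scale[of "-1" x] by simp

lemma proj_b: "i < r \<Longrightarrow> proj (b i) = 0"
proof -
  assume i: "i < r"
  have "(\<Sum>j<r. ((b i \<bullet> b j) / (b j \<bullet> b j)) *\<^sub>R b j) = (\<Sum>j<r. if j = i then b i else 0)"
    by (rule sum.cong) (use borth bsq i in auto)
  then show ?thesis unfolding proj_def using i by simp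
qed

lemma proj_decomp: "proj x = 0 \<Longrightarrow> x = (\<Sum>j<r. ((x \<bullet> b j) / (b j \<bullet> b j)) *\<^sub>R b j)"
  unfolding proj_def by simp

lemma proj_zero: "proj x = 0 \<Longrightarrow> (\<forall>j<r. b j \<bullet> x = 0) \<Longrightarrow> x = 0"
proof -
  assume a: "proj x = 0" "\<forall>j<r. b j \<bullet> x = 0"
  have "x = (\<Sum>j<r. ((x \<bullet> b j) / (b j \<bullet> b j)) *\<^sub>R b j)" using proj_decomp a by simp
  also have "\<dots> = 0" by (rule sum.neutral) (use a in \<open>auto simp: inner_commute\<close>)
  finally show ?thesis .
qed

lemma proj_single:
  assumes "proj x = 0" "i < r" "\<forall>j<r. j \<noteq> i \<longrightarrow> b j \<bullet> x = 0"
  shows "x = ((x \<bullet> b i) / (b i \<bullet> b i)) *\<^sub>R b i"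
proof -
  have "x = (\<Sum>j<r. ((x \<bullet> b j) / (b j \<bullet> b j)) *\<^sub>R b j)" using proj_decomp assms by simp
  also have "\<dots> = (\<Sum>j<r. if j = i then ((x \<bullet> b i) / (b i \<bullet> b i)) *\<^sub>R b i else 0)"
    by (rule sum.cong) (use assms in \<open>auto simp: inner_commute\<close>)
  also have "\<dots> = ((x \<bullet> b i) / (b i \<bullet> b i)) *\<^sub>R b i" using assms by simp
  finally show ?thesis .
qed

lemma proj_pair:
  assumes "proj x = 0" "i < r" "k < r" "i \<noteq> k" "\<forall>j<r. j \<noteq> i \<and> j \<noteq> k \<longrightarrow> b j \<bullet> x = 0"
  shows "x = ((x \<bullet> b i) / (b i \<bullet> b i)) *\<^sub>R b i + ((x \<bullet> b k) / (b k \<bullet> b k)) *\<^sub>R b k"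
proof -
  have "x = (\<Sum>j<r. ((x \<bullet> b j) / (b j \<bullet> b j)) *\<^sub>R b j)" using proj_decomp assms by simp
  also have "\<dots> = (\<Sum>j<r. (if j = i then ((x \<bullet> b i) / (b i \<bullet> b i)) *\<^sub>R b i else 0)
      + (if j = k then ((x \<bullet> b k) / (b k \<bullet> b k)) *\<^sub>R b k else 0))"
    by (rule sum.cong) (use assms in \<open>auto simp: inner_commute\<close>)
  also have "\<dots> = ((x \<bullet> b i) / (b i \<bullet> b i)) *\<^sub>R b i + ((x \<bullet> b k) / (b k \<bullet> b k)) *\<^sub>R b k"
    using assms by (simp add: sum.distrib)
  finally show ?thesis .
qed

abbreviation s :: "nat \<Rightarrow> 'a \<Rightarrow> 'a" where "s i \<equiv> refl_root (b i)"

lemma s_eq: "s i x = x - cf x (b i) *\<^sub>R b i" unfolding refl_root_def cf_def by simp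

lemma proj_s: "i < r \<Longrightarrow> proj (s i x) = proj x"
  unfolding s_eq by (simp add: proj_diff proj_scale proj_b)

lemma s_inner_other: "i < r \<Longrightarrow> j < r \<Longrightarrow> j \<noteq> i \<Longrightarrow> b j \<bullet> s i x = b j \<bullet> x"
  unfolding s_eq using borth by (simp add: inner_diff_right)

lemma s_inner_self: "i < r \<Longrightarrow> b i \<bullet> s i x = - (b i \<bullet> x)"
  using refl_root_inner_self[OF bnz] by (simp add: inner_commute)

lemma s_s: "i < r \<Longrightarrow> s i (s i x) = x" using refl_root_refl[OF bnz] by simp

lemma s_in: "i < r \<Longrightarrow> x \<in> \<Phi> \<Longrightarrow> s i x \<in> \<Phi>" using refl_in bin by auto

lemma s_norm: "i < r \<Longrightarrow> s i x \<bullet> s i x = x \<bullet> x" using refl_root_inner[OF bnz] by simp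

lemma cf_s_other: "i < r \<Longrightarrow> j < r \<Longrightarrow> j \<noteq> i \<Longrightarrow> cf (b j) (s i x) = cf (b j) x"
  unfolding cf_def by (simp add: s_inner_other s_norm)

lemma cf_s_self: "i < r \<Longrightarrow> cf (b i) (s i x) = - cf (b i) x"
  unfolding cf_def by (simp add: s_inner_self s_norm)

definition P :: "'a set" where
  "P = {\<gamma>\<in>\<Phi>. (proj \<gamma> \<noteq> 0 \<and> proj \<gamma> \<in> halfC) \<or>
         (proj \<gamma> = 0 \<and> (\<exists>i<r. b i \<bullet> \<gamma> > 0 \<and> (\<forall>j<i. b j \<bullet> \<gamma> = 0)))}"

lemma P_sub: "P \<subseteq> \<Phi>" unfolding P_def by auto

lemma P_half: "\<gamma> \<in> \<Phi> \<Longrightarrow> \<gamma> \<in> P \<longleftrightarrow> - \<gamma> \<notin> P"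
proof -
  assume g: "\<gamma> \<in> \<Phi>"
  show ?thesis
  proof (cases "proj \<gamma> = 0")
    case False
    then show ?thesis using g neg_in halfC[OF False] unfolding P_def by (auto simp: proj_neg)
  next
    case True
    have ex: "\<exists>j<r. b j \<bullet> \<gamma> \<noteq> 0" using proj_zero[OF True] nz[OF g] by auto
    have "(\<exists>i<r. b i \<bullet> \<gamma> > 0 \<and> (\<forall>j<i. b j \<bullet> \<gamma> = 0)) \<longleftrightarrow>
          \<not> (\<exists>i<r. b i \<bullet> \<gamma> < 0 \<and> (\<forall>j<i. b j \<bullet> \<gamma> = 0))"
      by (rule lex_half[of r "\<lambda>j. b j \<bullet> \<gamma>", OF ex])
    then show ?thesis using g neg_in True unfolding P_def by (auto simp: proj_neg)
  qed
qed

definition rho :: 'a where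
  "rho = (1/2) *\<^sub>R (\<Sum>\<gamma>\<in>P. (2 / (\<gamma> \<bullet> \<gamma>)) *\<^sub>R \<gamma>)"

lemma inner_rho: "x \<bullet> rho = (1/2) * (\<Sum>\<gamma>\<in>P. cf x \<gamma>)"
  unfolding rho_def cf_def by (simp add: inner_sum_right sum_distrib_left)

lemma inner_rho_I: "x \<in> \<Phi> \<Longrightarrow> x \<bullet> rho = of_int (\<Sum>\<gamma>\<in>P. cI x \<gamma>) / 2"
  unfolding inner_rho using cI_eq P_sub by (auto intro!: sum.cong)

lemma rho_int: "x \<in> \<Phi> \<Longrightarrow> x \<bullet> rho \<in> \<int>"
proof -
  assume x: "x \<in> \<Phi>"
  obtain k where "(\<Sum>\<gamma>\<in>P. cI x \<gamma>) = 2 * k" using rho_even[OF P_sub P_half x] by auto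
  then show ?thesis using inner_rho_I[OF x] by simp
qed

end


context sos begin

definition Bset :: "nat \<Rightarrow> 'a set" where
  "Bset i = {\<gamma>\<in>\<Phi>. proj \<gamma> = 0 \<and> b i \<bullet> \<gamma> > 0 \<and> (\<forall>j<i. b j \<bullet> \<gamma> = 0)}"
definition Tset :: "nat \<Rightarrow> 'a set" where "Tset i = Bset i - {b i}"
definition k1 :: "nat \<Rightarrow> 'a \<Rightarrow> nat" where "k1 i \<gamma> = (LEAST k. i < k \<and> k < r \<and> b k \<bullet> \<gamma> \<noteq> 0)"
definition more :: "nat \<Rightarrow> 'a \<Rightarrow> bool" where "more i \<gamma> = (\<exists>k. k1 i \<gamma> < k \<and> k < r \<and> b k \<bullet> \<gamma> \<noteq> 0)"
definition k2 :: "nat \<Rightarrow> 'a \<Rightarrow> nat" where "k2 i \<gamma> = (LEAST k. k1 i \<gamma> < k \<and> k < r \<and> b k \<bullet> \<gamma> \<noteq> 0)"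
definition Tp :: "nat \<Rightarrow> 'a set" where "Tp i = {\<gamma>\<in>Tset i. b (k1 i \<gamma>) \<bullet> \<gamma> > 0}"
definition Tm :: "nat \<Rightarrow> 'a set" where "Tm i = {\<gamma>\<in>Tset i. b (k1 i \<gamma>) \<bullet> \<gamma> < 0}"
definition Fset :: "nat \<Rightarrow> 'a set" where "Fset i = {\<gamma>\<in>Tp i. \<not> more i \<gamma>}"

definition same_pat :: "'a \<Rightarrow> 'a \<Rightarrow> bool" where
  "same_pat x y = (\<forall>j<r. (b j \<bullet> x \<noteq> 0) = (b j \<bullet> y \<noteq> 0))"

lemma pat_k1: "same_pat x y \<Longrightarrow> k1 i x = k1 i y"
proof -
  assume "same_pat x y"
  then have "(\<lambda>k. i < k \<and> k < r \<and> b k \<bullet> x \<noteq> 0) = (\<lambda>k. i < k \<and> k < r \<and> b k \<bullet> y \<noteq> 0)"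
    unfolding same_pat_def by (auto intro!: ext)
  then show ?thesis unfolding k1_def by simp
qed

lemma pat_more: "same_pat x y \<Longrightarrow> more i x = more i y"
proof -
  assume a: "same_pat x y"
  then have "(\<lambda>k. k1 i x < k \<and> k < r \<and> b k \<bullet> x \<noteq> 0) = (\<lambda>k. k1 i y < k \<and> k < r \<and> b k \<bullet> y \<noteq> 0)"
    using pat_k1[OF a] unfolding same_pat_def by (auto intro!: ext)
  then show ?thesis unfolding more_def by metis
qed

lemma pat_k2: "same_pat x y \<Longrightarrow> k2 i x = k2 i y"
proof -
  assume a: "same_pat x y"
  then have "(\<lambda>k. k1 i x < k \<and> k < r \<and> b k \<bullet> x \<noteq> 0) = (\<lambda>k. k1 i y < k \<and> k < r \<and> b k \<bullet> y \<noteq> 0)"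
    using pat_k1[OF a] unfolding same_pat_def by (auto intro!: ext)
  then show ?thesis unfolding k2_def by simp
qed

lemma pat_s: "k < r \<Longrightarrow> same_pat (s k \<gamma>) \<gamma>"
  unfolding same_pat_def using s_inner_other s_inner_self by (metis neg_equal_0_iff_equal)

lemma B_sub_P: "i < r \<Longrightarrow> Bset i \<subseteq> P" unfolding Bset_def P_def by auto

lemma T_ex: assumes "\<gamma> \<in> Tset i" "i < r" shows "\<exists>k. i < k \<and> k < r \<and> b k \<bullet> \<gamma> \<noteq> 0"
proof (rule ccontr)
  assume n: "\<not> ?thesis"
  have g: "\<gamma> \<in> \<Phi>" "proj \<gamma> = 0" "b i \<bullet> \<gamma> > 0" "\<forall>j<i. b j \<bullet> \<gamma> = 0" "\<gamma> \<noteq> b i"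
    using assms unfolding Tset_def Bset_def by auto
  have "\<forall>j<r. j \<noteq> i \<longrightarrow> b j \<bullet> \<gamma> = 0" using n g(4) by (metis linorder_neqE_nat)
  then have e: "\<gamma> = ((\<gamma> \<bullet> b i) / (b i \<bullet> b i)) *\<^sub>R b i" using proj_single g(2) assms(2) by auto
  define c where "c = (\<gamma> \<bullet> b i) / (b i \<bullet> b i)"
  have "c = 1 \<or> c = -1" using red[OF bin[OF assms(2)]] g(1) e c_def by metis
  moreover have "c > 0" unfolding c_def using g(3) bsq[OF assms(2)] by (simp add: inner_commute)
  ultimately have "c = 1" by auto
  then show False using e[folded c_def] g(5) by simp
qed

lemma k1_props:
  assumes "\<gamma> \<in> Tset i" "i < r"
  shows "i < k1 i \<gamma>" "k1 i \<gamma> < r" "b (k1 i \<gamma>) \<bullet> \<gamma> \<noteq> 0" "\<And>j. i < j \<Longrightarrow> j < k1 i \<gamma> \<Longrightarrow> b j \<bullet> \<gamma> = 0"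
proof -
  obtain k where k: "i < k \<and> k < r \<and> b k \<bullet> \<gamma> \<noteq> 0" using T_ex[OF assms] by auto
  have L: "i < k1 i \<gamma> \<and> k1 i \<gamma> < r \<and> b (k1 i \<gamma>) \<bullet> \<gamma> \<noteq> 0"
    unfolding k1_def by (rule LeastI[of _ k]) (use k in auto)
  then show "i < k1 i \<gamma>" "k1 i \<gamma> < r" "b (k1 i \<gamma>) \<bullet> \<gamma> \<noteq> 0" by auto
  fix j assume j: "i < j" "j < k1 i \<gamma>"
  then show "b j \<bullet> \<gamma> = 0" using not_less_Least[of j "\<lambda>k. i < k \<and> k < r \<and> b k \<bullet> \<gamma> \<noteq> 0"] L
    unfolding k1_def by auto
qed

lemma k2_props:
  assumes "more i \<gamma>"
  shows "k1 i \<gamma> < k2 i \<gamma>" "k2 i \<gamma> < r" "b (k2 i \<gamma>) \<bullet> \<gamma> \<noteq> 0"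
proof -
  obtain k where k: "k1 i \<gamma> < k \<and> k < r \<and> b k \<bullet> \<gamma> \<noteq> 0" using assms unfolding more_def by auto
  have L: "k1 i \<gamma> < k2 i \<gamma> \<and> k2 i \<gamma> < r \<and> b (k2 i \<gamma>) \<bullet> \<gamma> \<noteq> 0"
    unfolding k2_def by (rule LeastI[of _ k]) (use k in auto)
  then show "k1 i \<gamma> < k2 i \<gamma>" "k2 i \<gamma> < r" "b (k2 i \<gamma>) \<bullet> \<gamma> \<noteq> 0" by auto
qed

lemma T_s:
  assumes "\<gamma> \<in> Tset i" "i < k" "k < r"
  shows "s k \<gamma> \<in> Tset i"
proof -
  have g: "\<gamma> \<in> \<Phi>" "proj \<gamma> = 0" "b i \<bullet> \<gamma> > 0" "\<forall>j<i. b j \<bullet> \<gamma> = 0" "\<gamma> \<noteq> b i"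
    using assms unfolding Tset_def Bset_def by auto
  have ir: "i < r" using assms by auto
  have "s k \<gamma> \<in> \<Phi>" using s_in g assms by auto
  moreover have "proj (s k \<gamma>) = 0" using proj_s g assms by auto
  moreover have "b i \<bullet> s k \<gamma> > 0" using s_inner_other[of k i \<gamma>] g assms ir by auto
  moreover have "\<forall>j<i. b j \<bullet> s k \<gamma> = 0" using s_inner_other[of k _ \<gamma>] g assms by auto
  moreover have "s k \<gamma> \<noteq> b i"
  proof
    assume "s k \<gamma> = b i"
    then have "\<gamma> = s k (b i)" using s_s[OF assms(3)] by metis
    also have "\<dots> = b i" using refl_root_orth borth[of i k] assms ir by auto
    finally show False using g(5) by simp
  qed
  ultimately show ?thesis unfolding Tset_def Bset_def by auto
qed

lemma cI_s_other: "i < r \<Longrightarrow> k < r \<Longrightarrow> k \<noteq> i \<Longrightarrow> cI (b i) (s k \<gamma>) = cI (b i) \<gamma>"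
  unfolding cI_def using cf_s_other by simp

lemma cI_s_self: "i < r \<Longrightarrow> \<gamma> \<in> \<Phi> \<Longrightarrow> cI (b i) (s i \<gamma>) = - cI (b i) \<gamma>"
proof -
  assume a: "i < r" "\<gamma> \<in> \<Phi>"
  have "(of_int (cI (b i) (s i \<gamma>))::real) = - of_int (cI (b i) \<gamma>)"
    using cI_eq[OF s_in[OF a] bin[OF a(1)]] cI_eq[OF a(2) bin[OF a(1)]] cf_s_self[OF a(1)] by simp
  then show ?thesis by linarith
qed

lemma sumP_B:
  assumes i: "i < r"
  shows "(\<Sum>\<gamma>\<in>P. cI (b i) \<gamma>) = (\<Sum>\<gamma>\<in>Bset i. cI (b i) \<gamma>)"
proof -
  define A where "A = P - Bset i"
  have finP: "finite P" using P_sub fin finite_subset by auto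
  have "(\<Sum>\<gamma>\<in>P. cI (b i) \<gamma>) = (\<Sum>\<gamma>\<in>A. cI (b i) \<gamma>) + (\<Sum>\<gamma>\<in>Bset i. cI (b i) \<gamma>)"
    unfolding A_def by (rule sum.subset_diff[OF B_sub_P[OF i] finP])
  moreover have "(\<Sum>\<gamma>\<in>A. cI (b i) \<gamma>) = 0"
  proof (rule sum_neg_inv_zero[where \<tau>="s i"])
    show "finite A" unfolding A_def using finP by auto
    fix \<gamma> assume gA: "\<gamma> \<in> A"
    then have gP: "\<gamma> \<in> P" and gB: "\<gamma> \<notin> Bset i" unfolding A_def by auto
    have g: "\<gamma> \<in> \<Phi>" using gP P_sub by auto
    show "s i (s i \<gamma>) = \<gamma>" using s_s[OF i] .
    show "cI (b i) (s i \<gamma>) = - cI (b i) \<gamma>" using cI_s_self[OF i g] .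
    show "s i \<gamma> \<in> A"
    proof (cases "proj \<gamma> = 0")
      case False
      then have "proj \<gamma> \<in> halfC" using gP unfolding P_def by auto
      then have "s i \<gamma> \<in> P" using False proj_s[OF i] s_in[OF i g] unfolding P_def by auto
      moreover have "s i \<gamma> \<notin> Bset i" using False proj_s[OF i] unfolding Bset_def by auto
      ultimately show ?thesis unfolding A_def by auto
    next
      case True
      then obtain k where k: "k < r" "b k \<bullet> \<gamma> > 0" "\<forall>j<k. b j \<bullet> \<gamma> = 0" using gP unfolding P_def by auto
      have "k \<noteq> i" using gB k True g unfolding Bset_def by auto
      then consider "k < i" | "i < k" by linarith
      then show ?thesis
      proof cases
        case 1
        have same: "b j \<bullet> s i \<gamma> = b j \<bullet> \<gamma>" if "j \<le> k" for j
          using s_inner_other[OF i, of j \<gamma>] that 1 k(1) by auto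
        have "s i \<gamma> \<in> P" unfolding P_def using s_in[OF i g] proj_s[OF i] True k same
          by (auto intro!: exI[of _ k])
        moreover have "s i \<gamma> \<notin> Bset i" unfolding Bset_def using same[of k] k 1 by auto
        ultimately show ?thesis unfolding A_def by auto
      next
        case 2
        then have "b i \<bullet> \<gamma> = 0" using k by auto
        then have "s i \<gamma> = \<gamma>" using refl_root_orth by (simp add: inner_commute)
        then show ?thesis using gA by simp
      qed
    qed
  qed
  ultimately show ?thesis by simp
qed

lemma bi_B: "i < r \<Longrightarrow> b i \<in> Bset i"
  unfolding Bset_def using bin proj_b bsq borth by auto

lemma cI_bb: "i < r \<Longrightarrow> cI (b i) (b i) = 2"
  unfolding cI_def cf_def using bsq by simp

lemma sumB_T:
  assumes i: "i < r"
  shows "(\<Sum>\<gamma>\<in>Bset i. cI (b i) \<gamma>) = 2 + (\<Sum>\<gamma>\<in>Tset i. cI (b i) \<gamma>)"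
proof -
  have finB: "finite (Bset i)" using fin unfolding Bset_def by auto
  show ?thesis unfolding Tset_def using sum.remove[OF finB bi_B[OF i], of "cI (b i)"] cI_bb[OF i] by simp
qed

lemma finT: "finite (Tset i)" using fin unfolding Tset_def Bset_def by auto

lemma sumT_Tp:
  assumes i: "i < r"
  shows "(\<Sum>\<gamma>\<in>Tset i. cI (b i) \<gamma>) = 2 * (\<Sum>\<gamma>\<in>Tp i. cI (b i) \<gamma>)"
proof -
  define \<sigma> where "\<sigma> \<gamma> = s (k1 i \<gamma>) \<gamma>" for \<gamma>
  have sT: "\<sigma> \<gamma> \<in> Tset i" "k1 i (\<sigma> \<gamma>) = k1 i \<gamma>" "b (k1 i \<gamma>) \<bullet> \<sigma> \<gamma> = - (b (k1 i \<gamma>) \<bullet> \<gamma>)"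
     "\<sigma> (\<sigma> \<gamma>) = \<gamma>" "cI (b i) (\<sigma> \<gamma>) = cI (b i) \<gamma>" if "\<gamma> \<in> Tset i" for \<gamma>
  proof -
    note kp = k1_props[OF that i]
    show "\<sigma> \<gamma> \<in> Tset i" unfolding \<sigma>_def using T_s[OF that kp(1,2)] .
    show k: "k1 i (\<sigma> \<gamma>) = k1 i \<gamma>" unfolding \<sigma>_def using pat_k1[OF pat_s[OF kp(2)]] .
    show "b (k1 i \<gamma>) \<bullet> \<sigma> \<gamma> = - (b (k1 i \<gamma>) \<bullet> \<gamma>)" unfolding \<sigma>_def using s_inner_self[OF kp(2)] .
    show "\<sigma> (\<sigma> \<gamma>) = \<gamma>" unfolding \<sigma>_def using k[unfolded \<sigma>_def] s_s[OF kp(2)] by simp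
    show "cI (b i) (\<sigma> \<gamma>) = cI (b i) \<gamma>" unfolding \<sigma>_def using cI_s_other[OF i kp(2)] kp(1) by simp
  qed
  have TU: "Tset i = Tp i \<union> Tm i" using k1_props(3)[OF _ i] unfolding Tp_def Tm_def
    by (auto simp: linorder_neq_iff)
  have disj: "Tp i \<inter> Tm i = {}" unfolding Tp_def Tm_def by auto
  have img: "\<sigma> ` Tp i = Tm i"
  proof
    show "\<sigma> ` Tp i \<subseteq> Tm i" using sT unfolding Tp_def Tm_def by auto
    show "Tm i \<subseteq> \<sigma> ` Tp i"
    proof
      fix \<gamma> assume g: "\<gamma> \<in> Tm i"
      then have gT: "\<gamma> \<in> Tset i" unfolding Tm_def by auto
      have "\<sigma> \<gamma> \<in> Tp i" using sT[OF gT] g unfolding Tp_def Tm_def by auto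
      moreover have "\<gamma> = \<sigma> (\<sigma> \<gamma>)" using sT[OF gT] by simp
      ultimately show "\<gamma> \<in> \<sigma> ` Tp i" by blast
    qed
  qed
  have inj: "inj_on \<sigma> (Tp i)" unfolding inj_on_def Tp_def using sT by (metis (no_types, lifting) mem_Collect_eq)
  have finTp: "finite (Tp i)" "finite (Tm i)" using finT unfolding Tp_def Tm_def by auto
  have "(\<Sum>\<gamma>\<in>Tm i. cI (b i) \<gamma>) = (\<Sum>\<gamma>\<in>Tp i. cI (b i) (\<sigma> \<gamma>))"
    using sum.reindex[OF inj, of "cI (b i)"] img by simp
  also have "\<dots> = (\<Sum>\<gamma>\<in>Tp i. cI (b i) \<gamma>)" using sT unfolding Tp_def by (auto intro!: sum.cong)
  finally have "(\<Sum>\<gamma>\<in>Tm i. cI (b i) \<gamma>) = (\<Sum>\<gamma>\<in>Tp i. cI (b i) \<gamma>)" .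
  then show ?thesis using TU disj sum.union_disjoint[OF finTp disj, of "cI (b i)"] by simp
qed

lemma sumTp_F:
  assumes i: "i < r"
  shows "even ((\<Sum>\<gamma>\<in>Tp i. cI (b i) \<gamma>) - (\<Sum>\<gamma>\<in>Fset i. cI (b i) \<gamma>))"
proof -
  define \<tau> where "\<tau> \<gamma> = (if more i \<gamma> then s (k2 i \<gamma>) \<gamma> else \<gamma>)" for \<gamma>
  have tT: "\<tau> \<gamma> \<in> Tp i \<and> \<tau> (\<tau> \<gamma>) = \<gamma> \<and> cI (b i) (\<tau> \<gamma>) = cI (b i) \<gamma> \<and> (\<tau> \<gamma> = \<gamma> \<longleftrightarrow> \<not> more i \<gamma>)"
    if g: "\<gamma> \<in> Tp i" for \<gamma>
  proof (cases "more i \<gamma>")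
    case False then show ?thesis using g unfolding \<tau>_def by simp
  next
    case True
    have gT: "\<gamma> \<in> Tset i" using g unfolding Tp_def by auto
    note kp = k1_props[OF gT i]
    note kq = k2_props[OF True]
    let ?k = "k2 i \<gamma>"
    have pat: "same_pat (s ?k \<gamma>) \<gamma>" using pat_s[OF kq(2)] .
    have T1: "s ?k \<gamma> \<in> Tset i" using T_s[OF gT _ kq(2)] kp(1) kq(1) by auto
    have k1e: "k1 i (s ?k \<gamma>) = k1 i \<gamma>" using pat_k1[OF pat] .
    have "b (k1 i \<gamma>) \<bullet> s ?k \<gamma> = b (k1 i \<gamma>) \<bullet> \<gamma>" using s_inner_other[OF kq(2) kp(2)] kq(1) by auto
    then have inTp: "s ?k \<gamma> \<in> Tp i" using T1 k1e g unfolding Tp_def by auto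
    have me: "more i (s ?k \<gamma>)" using pat_more[OF pat] True by simp
    have k2e: "k2 i (s ?k \<gamma>) = ?k" using pat_k2[OF pat] .
    have inv: "\<tau> (\<tau> \<gamma>) = \<gamma>" unfolding \<tau>_def using True me k2e s_s[OF kq(2)] by simp
    have cIe: "cI (b i) (\<tau> \<gamma>) = cI (b i) \<gamma>" unfolding \<tau>_def using True cI_s_other[OF i kq(2)] kp(1) kq(1) by simp
    have "b ?k \<bullet> s ?k \<gamma> \<noteq> b ?k \<bullet> \<gamma>" using s_inner_self[OF kq(2)] kq(3) by auto
    then have "\<tau> \<gamma> \<noteq> \<gamma>" unfolding \<tau>_def using True by auto
    then show ?thesis using inTp inv cIe True unfolding \<tau>_def by simp
  qed
  have finTp: "finite (Tp i)" using finT unfolding Tp_def by auto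
  have e: "even (sum (cI (b i)) (Tp i) - sum (cI (b i)) {x\<in>Tp i. \<tau> x = x})"
    by (rule inv_even[OF finTp]) (use tT in auto)
  have "{x\<in>Tp i. \<tau> x = x} = Fset i" unfolding Fset_def using tT by auto
  then show ?thesis using e by simp
qed

end


lemma plane_t:
  fixes u v g :: "'a::euclidean_space"
  assumes g: "g = (x/A) *\<^sub>R u + (y/B) *\<^sub>R v" and uv: "u \<bullet> v = 0" and A: "A = u \<bullet> u" "A > 0"
    and B: "B = v \<bullet> v" "B > 0" and x: "x = g \<bullet> u" and y: "y = g \<bullet> v" and N: "g \<bullet> g > 0"
  shows "(2*x/A)*(2*x/(g \<bullet> g)) + (2*y/B)*(2*y/(g \<bullet> g)) = 4"
proof -
  have vu: "v \<bullet> u = 0" using uv by (simp add: inner_commute)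
  have "g \<bullet> g = (x/A)*(x/A)*(u \<bullet> u) + (y/B)*(y/B)*(v \<bullet> v)"
    unfolding g by (simp add: inner_add_left inner_add_right uv vu)
  then have "g \<bullet> g = (x/A)*(x/A)*A + (y/B)*(y/B)*B" using A B by simp
  also have "\<dots> = x*x/A + y*y/B" using A B by (simp add: field_simps)
  finally have e: "g \<bullet> g = x*x/A + y*y/B" .
  have "(2*x/A)*(2*x/(g \<bullet> g)) + (2*y/B)*(2*y/(g \<bullet> g)) = 4 * (x*x/A + y*y/B) / (g \<bullet> g)"
    using A B N by (simp add: field_simps)
  also have "\<dots> = 4" using e N by (simp add: nonzero_divide_eq_eq)
  finally show ?thesis .
qed

lemma scal_inj:
  assumes "rootsys \<Phi>" "g1 \<in> \<Phi>" "g2 \<in> \<Phi>" "c1 > 0" "c2 > 0" "c1 *\<^sub>R g1 = c2 *\<^sub>R g2"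
  shows "g1 = g2"
proof -
  have "(1/c1) *\<^sub>R (c1 *\<^sub>R g1) = (1/c1) *\<^sub>R (c2 *\<^sub>R g2)" using assms(6) by simp
  then have e: "g1 = (c2/c1) *\<^sub>R g2" using assms(4) by simp
  then have "c2/c1 = 1 \<or> c2/c1 = -1" using rootsys.red[OF assms(1,3)] assms(2) by metis
  moreover have "c2/c1 > 0" using assms by simp
  ultimately have "c2/c1 = 1" by auto
  then show ?thesis using e by simp
qed

context sos begin

lemma F_facts:
  assumes g: "\<gamma> \<in> Fset i" and i: "i < r"
  shows "\<gamma> \<in> \<Phi>" "proj \<gamma> = 0" "b i \<bullet> \<gamma> > 0" "b (k1 i \<gamma>) \<bullet> \<gamma> > 0" "i < k1 i \<gamma>" "k1 i \<gamma> < r"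
    "\<And>j. j < r \<Longrightarrow> j \<noteq> i \<Longrightarrow> j \<noteq> k1 i \<gamma> \<Longrightarrow> b j \<bullet> \<gamma> = 0"
proof -
  have gT: "\<gamma> \<in> Tset i" and gp: "b (k1 i \<gamma>) \<bullet> \<gamma> > 0" and nm: "\<not> more i \<gamma>"
    using g unfolding Fset_def Tp_def by auto
  note kp = k1_props[OF gT i]
  have gB: "\<gamma> \<in> \<Phi>" "proj \<gamma> = 0" "b i \<bullet> \<gamma> > 0" "\<forall>j<i. b j \<bullet> \<gamma> = 0"
    using gT unfolding Tset_def Bset_def by auto
  show "\<gamma> \<in> \<Phi>" "proj \<gamma> = 0" "b i \<bullet> \<gamma> > 0" "b (k1 i \<gamma>) \<bullet> \<gamma> > 0" "i < k1 i \<gamma>" "k1 i \<gamma> < r"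
    using gB gp kp by auto
  fix j assume j: "j < r" "j \<noteq> i" "j \<noteq> k1 i \<gamma>"
  consider "j < i" | "i < j \<and> j < k1 i \<gamma>" | "k1 i \<gamma> < j" using j by linarith
  then show "b j \<bullet> \<gamma> = 0"
  proof cases
    case 1 then show ?thesis using gB by auto
  next
    case 2 then show ?thesis using kp(4) by auto
  next
    case 3 then show ?thesis using nm j unfolding more_def by auto
  qed
qed

lemma F_decomp:
  assumes g: "\<gamma> \<in> Fset i" and i: "i < r"
  shows "\<gamma> = ((\<gamma> \<bullet> b i) / (b i \<bullet> b i)) *\<^sub>R b i + ((\<gamma> \<bullet> b (k1 i \<gamma>)) / (b (k1 i \<gamma>) \<bullet> b (k1 i \<gamma>))) *\<^sub>R b (k1 i \<gamma>)"
  by (rule proj_pair) (use F_facts[OF g i] i in auto)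

lemma F_t:
  assumes g: "\<gamma> \<in> Fset i" and i: "i < r"
  defines "k \<equiv> k1 i \<gamma>"
  shows "cI \<gamma> (b i) * cI (b i) \<gamma> + cI \<gamma> (b k) * cI (b k) \<gamma> = 4"
    "cI \<gamma> (b i) > 0" "cI (b i) \<gamma> > 0" "cI \<gamma> (b k) > 0" "cI (b k) \<gamma> > 0"
proof -
  note ff = F_facts[OF g i, folded k_def]
  have gp: "\<gamma> \<bullet> \<gamma> > 0" using sqpos ff(1) by auto
  have t: "(2*(\<gamma> \<bullet> b i)/(b i \<bullet> b i))*(2*(\<gamma> \<bullet> b i)/(\<gamma> \<bullet> \<gamma>)) + (2*(\<gamma> \<bullet> b k)/(b k \<bullet> b k))*(2*(\<gamma> \<bullet> b k)/(\<gamma> \<bullet> \<gamma>)) = 4"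
    by (rule plane_t[OF F_decomp[OF g i, folded k_def]]) (use borth[of i k] ff bsq i gp in auto)
  have e1: "of_int (cI \<gamma> (b i)) = 2*(\<gamma> \<bullet> b i)/(b i \<bullet> b i)" using cI_eq[OF bin[OF i] ff(1)] unfolding cf_def .
  have e2: "of_int (cI (b i) \<gamma>) = 2*(\<gamma> \<bullet> b i)/(\<gamma> \<bullet> \<gamma>)" using cI_eq[OF ff(1) bin[OF i]] unfolding cf_def by (simp add: inner_commute)
  have e3: "of_int (cI \<gamma> (b k)) = 2*(\<gamma> \<bullet> b k)/(b k \<bullet> b k)" using cI_eq[OF bin[OF ff(6)] ff(1)] unfolding cf_def .
  have e4: "of_int (cI (b k) \<gamma>) = 2*(\<gamma> \<bullet> b k)/(\<gamma> \<bullet> \<gamma>)" using cI_eq[OF ff(1) bin[OF ff(6)]] unfolding cf_def by (simp add: inner_commute)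
  have "(of_int (cI \<gamma> (b i) * cI (b i) \<gamma> + cI \<gamma> (b k) * cI (b k) \<gamma>)::real) = 4"
    using t e1 e2 e3 e4 by simp
  then show "cI \<gamma> (b i) * cI (b i) \<gamma> + cI \<gamma> (b k) * cI (b k) \<gamma> = 4" by linarith
  have pi: "\<gamma> \<bullet> b i > 0" "\<gamma> \<bullet> b k > 0" using ff by (auto simp: inner_commute)
  have "(of_int (cI \<gamma> (b i))::real) > 0" using e1 pi bsq[OF i] by simp
  then show "cI \<gamma> (b i) > 0" by simp
  have "(of_int (cI (b i) \<gamma>)::real) > 0" using e2 pi gp by simp
  then show "cI (b i) \<gamma> > 0" by simp
  have "(of_int (cI \<gamma> (b k))::real) > 0" using e3 pi bsq[OF ff(6)] by simp
  then show "cI \<gamma> (b k) > 0" by simp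
  have "(of_int (cI (b k) \<gamma>)::real) > 0" using e4 pi gp by simp
  then show "cI (b k) \<gamma> > 0" by simp
qed

end


lemma refl_cf: "refl_root g x = x - cf x g *\<^sub>R g" unfolding refl_root_def cf_def by simp

context sos begin

lemma F_odd13:
  assumes g: "\<gamma> \<in> Fset i" and i: "i < r" and od: "odd (cI (b i) \<gamma>)"
  shows "cI \<gamma> (b i) * cI (b i) \<gamma> = 1 \<or> cI \<gamma> (b i) * cI (b i) \<gamma> = 3"
proof -
  define k where "k = k1 i \<gamma>"
  note ff = F_facts[OF g i, folded k_def]
  note ft = F_t[OF g i, folded k_def]
  define ni where "ni = cI \<gamma> (b i)"
  define fi where "fi = cI (b i) \<gamma>"
  define nk where "nk = cI \<gamma> (b k)"
  define fk where "fk = cI (b k) \<gamma>"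
  have pos: "ni > 0" "fi > 0" "nk > 0" "fk > 0" "ni*fi + nk*fk = 4"
    using ft unfolding ni_def fi_def nk_def fk_def by auto
  have "ni*fi > 0" "nk*fk > 0" using pos by simp_all
  then have "ni*fi \<ge> 1" "nk*fk \<ge> 1" by linarith+
  then have p: "ni*fi \<le> 3" using pos by linarith
  have "ni*fi \<noteq> 2"
  proof
    assume p2: "ni*fi = 2"
    have "fi \<le> ni*fi" using mult_right_mono[of 1 ni fi] pos by simp
    then have "fi = 1 \<or> fi = 2" using p2 pos by linarith
    then have fi1: "fi = 1" using od unfolding fi_def by auto
    then have ni2: "ni = 2" using p2 by simp
    have q2: "nk*fk = 2" using p2 pos by simp
    have "nk \<le> nk*fk" using mult_left_mono[of 1 fk nk] pos by simp
    then have nk12: "nk = 1 \<or> nk = 2" using q2 pos by linarith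
    have e1: "(\<gamma> \<bullet> b i) / (b i \<bullet> b i) = of_int ni / 2"
      using cI_eq[OF bin[OF i] ff(1)] unfolding ni_def cf_def by simp
    have e3: "(\<gamma> \<bullet> b k) / (b k \<bullet> b k) = of_int nk / 2"
      using cI_eq[OF bin[OF ff(6)] ff(1)] unfolding nk_def cf_def by simp
    have dec: "\<gamma> = (of_int ni / 2) *\<^sub>R b i + (of_int nk / 2) *\<^sub>R b k"
      using F_decomp[OF g i, folded k_def] e1 e3 by simp
    have ik: "i \<noteq> k" using ff by auto
    from nk12 show False
    proof
      assume "nk = 2"
      then have "\<gamma> = b i + b k" using dec ni2 by simp
      then show False using bsum[OF i ff(6) ik] ff(1) by simp
    next
      assume nk1: "nk = 1"
      then have gam: "\<gamma> = b i + (1/2) *\<^sub>R b k" using dec ni2 by simp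
      have "cf (b i) \<gamma> = 1" using cI_eq[OF ff(1) bin[OF i]] fi1 unfolding fi_def by simp
      then have "refl_root \<gamma> (b i) = b i - \<gamma>" using refl_cf[of \<gamma> "b i"] by simp
      also have "\<dots> = (-1/2) *\<^sub>R b k" using gam by simp
      finally have "(-1/2) *\<^sub>R b k \<in> \<Phi>" using refl_in[OF ff(1) bin[OF i]] by simp
      moreover have "(-2) *\<^sub>R ((-1/2) *\<^sub>R b k) = b k" by simp
      ultimately have "(-2::real) = 1 \<or> (-2::real) = -1" using red bin[OF ff(6)] by metis
      then show False by simp
    qed
  qed
  moreover have "ni*fi > 0" using pos by simp
  ultimately show ?thesis using p unfolding ni_def fi_def by linarith
qed

lemma flip:
  assumes g: "\<gamma> \<in> Fset i" and i: "i < r" and m: "m = i \<or> m = k1 i \<gamma>"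
    and t3: "cI \<gamma> (b m) * cI (b m) \<gamma> = 3"
  defines "\<psi> \<equiv> cf (b m) \<gamma> *\<^sub>R \<gamma> - b m"
  shows "\<psi> \<in> Fset i" "same_pat \<psi> \<gamma>" "cI \<psi> (b m) * cI (b m) \<psi> = 1"
proof -
  define k where "k = k1 i \<gamma>"
  note ff = F_facts[OF g i, folded k_def]
  note ft = F_t[OF g i, folded k_def]
  have mr: "m < r" using m ff i k_def by auto
  have mpos: "b m \<bullet> \<gamma> > 0" using m ff k_def by auto
  define fm where "fm = cf (b m) \<gamma>"
  have fmI: "fm = of_int (cI (b m) \<gamma>)" using cI_eq[OF ff(1) bin[OF mr]] unfolding fm_def by simp
  have fmpos: "fm > 0" using fmI ft m k_def by auto
  have gnz: "\<gamma> \<noteq> 0" using nz ff(1) by auto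
  have psi_refl: "\<psi> = - refl_root \<gamma> (b m)" unfolding \<psi>_def refl_cf by simp
  have psiPhi: "\<psi> \<in> \<Phi>" using psi_refl refl_in[OF ff(1) bin[OF mr]] neg_in by simp
  have psinorm: "\<psi> \<bullet> \<psi> = b m \<bullet> b m" using psi_refl refl_root_inner[OF gnz] by simp
  have t3r: "(2 * (\<gamma> \<bullet> b m) / (b m \<bullet> b m)) * fm = 3"
    using t3 cI_eq[OF bin[OF mr] ff(1)] fmI unfolding cf_def
    by (metis (mono_tags, opaque_lifting) of_int_mult of_int_numeral)
  have fmx: "fm * (b m \<bullet> \<gamma>) = 3/2 * (b m \<bullet> b m)"
    using t3r bsq[OF mr] by (simp add: field_simps inner_commute)
  have bm: "b m \<bullet> \<psi> = (b m \<bullet> b m) / 2"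
    unfolding \<psi>_def fm_def[symmetric] using fmx by (simp add: inner_diff_right)
  have bj: "b j \<bullet> \<psi> = fm * (b j \<bullet> \<gamma>)" if "j < r" "j \<noteq> m" for j
    unfolding \<psi>_def fm_def[symmetric] using borth[OF that(1) mr that(2)] by (simp add: inner_diff_right)
  have bmpos: "b m \<bullet> \<psi> > 0"
  proof -
    have "(b m \<bullet> b m) / 2 > 0" using bsq[OF mr] by simp
    then show ?thesis using bm by linarith
  qed
  show pat: "same_pat \<psi> \<gamma>" unfolding same_pat_def
  proof (intro allI impI)
    fix j assume j: "j < r"
    show "(b j \<bullet> \<psi> \<noteq> 0) = (b j \<bullet> \<gamma> \<noteq> 0)"
    proof (cases "j = m")
      case True then show ?thesis using bmpos mpos by auto
    next
      case False then show ?thesis using bj[OF j False] fmpos by auto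
    qed
  qed
  have k1e: "k1 i \<psi> = k" using pat_k1[OF pat] k_def by simp
  have bkpos: "b k \<bullet> \<psi> > 0"
  proof (cases "k = m")
    case True then show ?thesis using bmpos by simp
  next
    case False then show ?thesis using bj[OF ff(6) False] fmpos ff(4) by auto
  qed
  have bipos: "b i \<bullet> \<psi> > 0"
  proof (cases "i = m")
    case True then show ?thesis using bmpos by simp
  next
    case False then show ?thesis using bj[OF i False] fmpos ff(3) by auto
  qed
  have below: "\<forall>j<i. b j \<bullet> \<psi> = 0"
  proof (intro allI impI)
    fix j assume j: "j < i"
    then have "j \<noteq> m" using m ff k_def by auto
    then show "b j \<bullet> \<psi> = 0" using bj[of j] j i ff(7)[of j] ff(5) by auto
  qed
  have projpsi: "proj \<psi> = 0" unfolding \<psi>_def using ff(2) proj_b[OF mr] by (simp add: proj_diff proj_scale)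
  have nbi: "\<psi> \<noteq> b i" using bkpos borth[of k i] ff i by auto
  have "\<psi> \<in> Tset i" unfolding Tset_def Bset_def using psiPhi projpsi bipos below nbi by auto
  moreover have "\<not> more i \<psi>" using pat_more[OF pat] g unfolding Fset_def by auto
  ultimately show "\<psi> \<in> Fset i" unfolding Fset_def Tp_def using k1e bkpos by auto
  have c1: "cf \<psi> (b m) = 1" unfolding cf_def using bm bsq[OF mr] by (simp add: inner_commute)
  have c2: "cf (b m) \<psi> = 1" unfolding cf_def using bm psinorm bsq[OF mr] by simp
  have "(of_int (cI \<psi> (b m))::real) = 1" using cI_eq[OF bin[OF mr] psiPhi] c1 by simp
  moreover have "(of_int (cI (b m) \<psi>)::real) = 1" using cI_eq[OF psiPhi bin[OF mr]] c2 by simp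
  ultimately show "cI \<psi> (b m) * cI (b m) \<psi> = 1" by simp
qed

end


context sos begin

lemma sumF_even:
  assumes i: "i < r"
  shows "even (\<Sum>\<gamma>\<in>Fset i. cI (b i) \<gamma>)"
proof -
  define tI where "tI \<gamma> = cI \<gamma> (b i) * cI (b i) \<gamma>" for \<gamma>
  define F1 where "F1 = {\<gamma>\<in>Fset i. tI \<gamma> = 1}"
  define F3 where "F3 = {\<gamma>\<in>Fset i. tI \<gamma> = 3}"
  define Fo where "Fo = {\<gamma>\<in>Fset i. odd (cI (b i) \<gamma>)}"
  have finF: "finite (Fset i)" using finT unfolding Fset_def Tp_def by auto
  have finF13: "finite F1" "finite F3" using finF unfolding F1_def F3_def by auto
  have FoU: "Fo = F1 \<union> F3"
  proof
    show "Fo \<subseteq> F1 \<union> F3" using F_odd13[OF _ i] unfolding Fo_def F1_def F3_def tI_def by auto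
    show "F1 \<union> F3 \<subseteq> Fo"
    proof
      fix \<gamma> assume "\<gamma> \<in> F1 \<union> F3"
      then have g: "\<gamma> \<in> Fset i" "odd (tI \<gamma>)" unfolding F1_def F3_def by auto
      then have "odd (cI (b i) \<gamma>)" unfolding tI_def by auto
      then show "\<gamma> \<in> Fo" using g unfolding Fo_def by auto
    qed
  qed
  have disj: "F1 \<inter> F3 = {}" unfolding F1_def F3_def by auto
  define \<phi>3 where "\<phi>3 \<gamma> = cf (b i) \<gamma> *\<^sub>R \<gamma> - b i" for \<gamma>
  define \<phi>1 where "\<phi>1 \<gamma> = cf (b (k1 i \<gamma>)) \<gamma> *\<^sub>R \<gamma> - b (k1 i \<gamma>)" for \<gamma>
  have m3: "\<phi>3 \<gamma> \<in> F1" if g: "\<gamma> \<in> F3" for \<gamma>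
  proof -
    have gF: "\<gamma> \<in> Fset i" and t: "cI \<gamma> (b i) * cI (b i) \<gamma> = 3" using g unfolding F3_def tI_def by auto
    note fl = flip[OF gF i disjI1[OF refl] t, folded \<phi>3_def]
    show ?thesis using fl unfolding F1_def tI_def by auto
  qed
  have m1: "\<phi>1 \<gamma> \<in> F3 \<and> k1 i (\<phi>1 \<gamma>) = k1 i \<gamma>" if g: "\<gamma> \<in> F1" for \<gamma>
  proof -
    have gF: "\<gamma> \<in> Fset i" and t: "cI \<gamma> (b i) * cI (b i) \<gamma> = 1" using g unfolding F1_def tI_def by auto
    have t3: "cI \<gamma> (b (k1 i \<gamma>)) * cI (b (k1 i \<gamma>)) \<gamma> = 3" using F_t(1)[OF gF i] t by simp
    note fl = flip[OF gF i disjI2[OF refl] t3, folded \<phi>1_def]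
    have pF: "\<phi>1 \<gamma> \<in> Fset i" using fl by auto
    have ke: "k1 i (\<phi>1 \<gamma>) = k1 i \<gamma>" using pat_k1[OF fl(2)] .
    have "cI (\<phi>1 \<gamma>) (b i) * cI (b i) (\<phi>1 \<gamma>) + 1 = 4" using F_t(1)[OF pF i] fl(3) ke by simp
    then show ?thesis using pF ke unfolding F3_def tI_def by auto
  qed
  have cpos: "cf (b j) \<gamma> > 0" if "\<gamma> \<in> Fset i" "j = i \<or> j = k1 i \<gamma>" for \<gamma> j
  proof -
    have jr: "j < r" using that F_facts[OF that(1) i] i by auto
    have "cf (b j) \<gamma> = of_int (cI (b j) \<gamma>)" using cI_eq[OF F_facts(1)[OF that(1) i] bin[OF jr]] by simp
    then show ?thesis using F_t[OF that(1) i] that(2) by auto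
  qed
  have Phi: "\<gamma> \<in> \<Phi>" if "\<gamma> \<in> Fset i" for \<gamma> using F_facts[OF that i] by auto
  have rsys: "rootsys \<Phi>" by (rule rootsys_axioms)
  have inj3: "inj_on \<phi>3 F3"
  proof (rule inj_onI)
    fix x y assume xy: "x \<in> F3" "y \<in> F3" "\<phi>3 x = \<phi>3 y"
    have xF: "x \<in> Fset i" and yF: "y \<in> Fset i" using xy unfolding F3_def by auto
    have "cf (b i) x *\<^sub>R x = cf (b i) y *\<^sub>R y" using xy(3) unfolding \<phi>3_def by simp
    then show "x = y" using scal_inj[OF rsys Phi[OF xF] Phi[OF yF] cpos[OF xF] cpos[OF yF]] by auto
  qed
  have inj1: "inj_on \<phi>1 F1"
  proof (rule inj_onI)
    fix x y assume xy: "x \<in> F1" "y \<in> F1" "\<phi>1 x = \<phi>1 y"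
    have xF: "x \<in> Fset i" and yF: "y \<in> Fset i" using xy unfolding F1_def by auto
    have ke: "k1 i x = k1 i y" using m1[OF xy(1)] m1[OF xy(2)] xy(3) by metis
    have "cf (b (k1 i x)) x *\<^sub>R x = cf (b (k1 i x)) y *\<^sub>R y" using xy(3) ke unfolding \<phi>1_def by simp
    then show "x = y" using scal_inj[OF rsys Phi[OF xF] Phi[OF yF] cpos[OF xF] cpos[OF yF, of "k1 i x"]] ke by auto
  qed
  have "card F3 \<le> card F1" by (rule card_inj_on_le[OF inj3 _ finF13(1)]) (use m3 in auto)
  moreover have "card F1 \<le> card F3" by (rule card_inj_on_le[OF inj1 _ finF13(2)]) (use m1 in auto)
  ultimately have ceq: "card F1 = card F3" by simp
  have "card Fo = card F1 + card F3" unfolding FoU using card_Un_disjoint[OF finF13 disj] .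
  then have "even (card Fo)" using ceq by simp
  moreover have "even ((\<Sum>\<gamma>\<in>Fset i. cI (b i) \<gamma>) - int (card Fo))"
    using sum_odd_card[OF finF, of "cI (b i)"] unfolding Fo_def .
  ultimately show ?thesis by (metis dvd_add diff_add_cancel even_of_nat)
qed

lemma sumP_mod4:
  assumes i: "i < r"
  shows "\<exists>k. (\<Sum>\<gamma>\<in>P. cI (b i) \<gamma>) = 4 * k + 2"
proof -
  have a: "(\<Sum>\<gamma>\<in>P. cI (b i) \<gamma>) = 2 + 2 * (\<Sum>\<gamma>\<in>Tp i. cI (b i) \<gamma>)"
    using sumP_B[OF i] sumB_T[OF i] sumT_Tp[OF i] by simp
  have "even (\<Sum>\<gamma>\<in>Tp i. cI (b i) \<gamma>)"
    using sumTp_F[OF i] sumF_even[OF i] by (metis dvd_add diff_add_cancel)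
  then obtain k where "(\<Sum>\<gamma>\<in>Tp i. cI (b i) \<gamma>) = 2 * k" by auto
  then show ?thesis using a by (intro exI[of _ k]) simp
qed

lemma main:
  "\<exists>\<omega>::'a. (\<forall>\<alpha>\<in>\<Phi>. \<alpha> \<bullet> \<omega> \<in> \<int>) \<and> (\<forall>i<r. b i \<bullet> \<omega> = 1)"
proof -
  have modd: "\<exists>k::int. b i \<bullet> rho = 2 * of_int k + 1" if i: "i < r" for i
  proof -
    obtain k where "(\<Sum>\<gamma>\<in>P. cI (b i) \<gamma>) = 4 * k + 2" using sumP_mod4[OF i] by auto
    then have "b i \<bullet> rho = of_int (4 * k + 2) / 2" using inner_rho_I[OF bin[OF i]] by simp
    then show ?thesis by (intro exI[of _ k]) simp
  qed
  define c where "c j = (1 - b j \<bullet> rho) / 2" for j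
  have cint': "c j \<in> \<int>" if jr: "j < r" for j
  proof -
    obtain k where "b j \<bullet> rho = 2 * of_int k + 1" using modd[OF jr] by auto
    then have "c j = - of_int k" unfolding c_def by simp
    then show ?thesis by simp
  qed
  define \<omega> where "\<omega> = rho + (\<Sum>j<r. (c j * (2 / (b j \<bullet> b j))) *\<^sub>R b j)"
  have inner_om: "x \<bullet> \<omega> = x \<bullet> rho + (\<Sum>j<r. c j * cf x (b j))" for x
    unfolding \<omega>_def cf_def by (simp add: inner_add_right inner_sum_right algebra_simps)
  have "\<alpha> \<bullet> \<omega> \<in> \<int>" if a: "\<alpha> \<in> \<Phi>" for \<alpha>
  proof -
    have "(\<Sum>j<r. c j * cf \<alpha> (b j)) \<in> \<int>"
      by (rule Ints_sum) (use cint' cint[OF bin a] in \<open>auto intro: Ints_mult\<close>)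
    then show ?thesis unfolding inner_om using rho_int[OF a] by (rule Ints_add[rotated])
  qed
  moreover have "b i \<bullet> \<omega> = 1" if i: "i < r" for i
  proof -
    have "(\<Sum>j<r. c j * cf (b i) (b j)) = (\<Sum>j<r. if j = i then 2 * c i else 0)"
    proof (rule sum.cong)
      fix j assume "j \<in> {..<r}"
      then show "c j * cf (b i) (b j) = (if j = i then 2 * c i else 0)"
        unfolding cf_def using borth[OF i, of j] bsq[OF i] by auto
    qed simp
    then have "(\<Sum>j<r. c j * cf (b i) (b j)) = 2 * c i" using i by simp
    then show ?thesis unfolding inner_om c_def by simp
  qed
  ultimately show ?thesis by blast
qed

end

theorem lemma1p19:
  fixes \<Phi> :: "'a::euclidean_space set" and \<beta> :: "nat \<Rightarrow> 'a" and r :: nat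
  assumes "root_system \<Phi>"
    and "\<And>i. i < r \<Longrightarrow> \<beta> i \<in> \<Phi>"
    and "\<And>i j. i < r \<Longrightarrow> j < r \<Longrightarrow> i \<noteq> j \<Longrightarrow> strongly_orthogonal \<Phi> (\<beta> i) (\<beta> j)"
  shows "\<exists>\<omega>::'a. (\<forall>\<alpha>\<in>\<Phi>. \<alpha> \<bullet> \<omega> \<in> \<int>) \<and> (\<forall>i<r. \<beta> i \<bullet> \<omega> = 1)"
proof -
  interpret sos \<Phi> \<beta> r
    by unfold_locales (use assms in auto)
  show ?thesis by (rule main)
qed


end
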